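(* VD is resistant to cloning. For each $f\in\{\mathrm{MF},\mathrm{BC},\mathrm{MS},\mathrm{FT}\}$, resistance to cloning fails: there exist a finite candidate set $C$ and a profile $P$ over $C$ with clones $a,a'$ such that condition (1) or condition (2) of the definition of resistance to cloning is violated.
   Context: Candidates come from a fixed infinite universe; rules are defined for profiles over every finite candidate set $C$. An approval ballot is a nonempty subset $A\subseteq C$; a profile over $C$ is a finite sequence of ballots. For $c\in C$, $P_{-c}$ is the profile over $C\setminus\{c\}$ obtained by removing $c$ from every ballot (ballots that become empty are discarded), and for an axis $\triangleleft$ on $C$, $\triangleleft_{-c}$ is its restriction to $C\setminus\{c\}$. Two candidates $a,a'$ are clones in $P$ if for every ballot $A\in P$, $a\in A$ iff $a'\in A$. An axis rule $f$ is resistant to cloning if for every profile $P$ in which $a,a'$ are clones: (1) for every $\triangleleft\in f(P)$, $\triangleleft_{-a}\in f(P_{-a})$; and (2) for every $\triangleleft^*\in f(P_{-a})$ there is $\triangleleft\in f(P)$ with $\triangleleft_{-a}=\triangleleft^*$. An axis is a strict linear order $\triangleleft$ on $C$; $a\trianglelefteq b$ means $a\triangleleft b$ or $a=b$. A ballot $A$ is an interval of $\triangleleft$ if for all $a,b\in A$ and every $c$ with $a\triangleleft c\triangleleft b$ we have $c\in A$. For a cost function $\mathrm{cost}_f$, the scoring rule returns $f(P)=\arg\min_{\triangleleft}\sum_{A\in P}\mathrm{cost}_f(A,\triangleleft)$ over all axes on $C$. The five rules are the scoring rules (on every $C$) with costs: $\mathrm{cost}_{\mathrm{VD}}(A,\triangleleft)=0$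 if $A$ is an interval of $\triangleleft$ and $1$ otherwise; $\mathrm{cost}_{\mathrm{MF}}(A,\triangleleft)=\min_{x,y\in A,\ x\trianglelefteq y}\big(|\{z\in A: z\triangleleft x \text{ or } y\triangleleft z\}|+|\{z\notin A: x\triangleleft z\triangleleft y\}|\big)$; $\mathrm{cost}_{\mathrm{BC}}(A,\triangleleft)=|\{b\notin A: a\triangleleft b\triangleleft c \text{ for some } a,c\in A\}|$; $\mathrm{cost}_{\mathrm{MS}}(A,\triangleleft)=\sum_{x\in C\setminus A}\min\big(|\{y\in A:y\triangleleft x\}|,\,|\{y\in A:x\triangleleft y\}|\big)$; $\mathrm{cost}_{\mathrm{FT}}(A,\triangleleft)=\sum_{x\in C\setminus A}|\{y\in A:y\triangleleft x\}|\cdot|\{y\in A:x\triangleleft y\}|$. *)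

theory Defs
  imports Main
begin

text \<open>An axis on a finite candidate set C is a duplicate-free list enumerating C,
  read from left to right.\<close>

type_synonym cand = nat
type_synonym axis = "cand list"
type_synonym ballot = "cand set"
type_synonym profile = "ballot list"

definition axes :: "cand set \<Rightarrow> axis set" where
  "axes C = {xs. distinct xs \<and> set xs = C}"

definition lt :: "axis \<Rightarrow> cand \<Rightarrow> cand \<Rightarrow> bool" where
  "lt xs a b \<longleftrightarrow> (\<exists>i j. i < j \<and> j < length xs \<and> xs ! i = a \<and> xs ! j = b)"

definition le :: "axis \<Rightarrow> cand \<Rightarrow> cand \<Rightarrow> bool" where
  "le xs a b \<longleftrightarrow> lt xs a b \<or> a = b"

definition is_profile :: "cand set \<Rightarrow> profile \<Rightarrow> bool" where
  "is_profile C P \<longleftrightarrow> (\<forall>A\<in>set P. A \<noteq> {} \<and> A \<subseteq> C)"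

definition remove_cand :: "cand \<Rightarrow> profile \<Rightarrow> profile" where
  "remove_cand c P = filter (\<lambda>A. A \<noteq> {}) (map (\<lambda>A. A - {c}) P)"

definition restrict_axis :: "cand \<Rightarrow> axis \<Rightarrow> axis" where
  "restrict_axis c xs = filter (\<lambda>x. x \<noteq> c) xs"

definition clones :: "profile \<Rightarrow> cand \<Rightarrow> cand \<Rightarrow> bool" where
  "clones P a a' \<longleftrightarrow> (\<forall>A\<in>set P. a \<in> A \<longleftrightarrow> a' \<in> A)"

type_synonym axis_rule = "cand set \<Rightarrow> profile \<Rightarrow> axis set"

definition resistant_to_cloning :: "axis_rule \<Rightarrow> bool" where
  "resistant_to_cloning f \<longleftrightarrow>
     (\<forall>C P a a'. finite C \<and> is_profile C P \<and> a \<in> C \<and> a' \<in> C \<and> a \<noteq> a' \<and> clones P a a' \<longrightarrow>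
        (\<forall>xs\<in>f C P. restrict_axis a xs \<in> f (C - {a}) (remove_cand a P)) \<and>
        (\<forall>ys\<in>f (C - {a}) (remove_cand a P). \<exists>xs\<in>f C P. restrict_axis a xs = ys))"

definition scoring_rule :: "(ballot \<Rightarrow> axis \<Rightarrow> nat) \<Rightarrow> axis_rule" where
  "scoring_rule cost C P =
     {xs \<in> axes C. \<forall>ys \<in> axes C. (\<Sum>A\<leftarrow>P. cost A xs) \<le> (\<Sum>A\<leftarrow>P. cost A ys)}"

definition is_interval :: "ballot \<Rightarrow> axis \<Rightarrow> bool" where
  "is_interval A xs \<longleftrightarrow> (\<forall>a\<in>A. \<forall>b\<in>A. \<forall>c. lt xs a c \<and> lt xs c b \<longrightarrow> c \<in> A)"

definition cost_VD :: "ballot \<Rightarrow> axis \<Rightarrow> nat" where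
  "cost_VD A xs = (if is_interval A xs then 0 else 1)"

definition cost_MF :: "ballot \<Rightarrow> axis \<Rightarrow> nat" where
  "cost_MF A xs = Min ((\<lambda>(x, y). card {z \<in> A. lt xs z x \<or> lt xs y z}
                                + card {z \<in> set xs - A. lt xs x z \<and> lt xs z y})
                       ` {(x, y). x \<in> A \<and> y \<in> A \<and> le xs x y})"

definition cost_BC :: "ballot \<Rightarrow> axis \<Rightarrow> nat" where
  "cost_BC A xs = card {b \<in> set xs - A. \<exists>a\<in>A. \<exists>c\<in>A. lt xs a b \<and> lt xs b c}"

definition cost_MS :: "ballot \<Rightarrow> axis \<Rightarrow> nat" where
  "cost_MS A xs = (\<Sum>x\<in>set xs - A. min (card {y\<in>A. lt xs y x}) (card {y\<in>A. lt xs x y}))"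

definition cost_FT :: "ballot \<Rightarrow> axis \<Rightarrow> nat" where
  "cost_FT A xs = (\<Sum>x\<in>set xs - A. card {y\<in>A. lt xs y x} * card {y\<in>A. lt xs x y})"

end

theory Submission
  imports Defs "HOL-Combinatorics.Multiset_Permutations"
begin


lemma lt_Nil[simp]: "\<not> lt [] a b" by (simp add: lt_def)

lemma lt_Cons: "lt (x#xs) a b \<longleftrightarrow> (x = a \<and> b \<in> set xs) \<or> lt xs a b"
proof
  assume "lt (x#xs) a b"
  then obtain i j where ij: "i < j" "j < Suc (length xs)" "(x#xs)!i = a" "(x#xs)!j = b"
    unfolding lt_def by auto
  obtain j' where j': "j = Suc j'" using ij(1) by (cases j) auto
  show "(x = a \<and> b \<in> set xs) \<or> lt xs a b"
  proof (cases i)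
    case 0
    then show ?thesis using ij j' by (auto simp: in_set_conv_nth)
  next
    case (Suc i')
    then have "lt xs a b" unfolding lt_def using ij j' by (intro exI[of _ i'] exI[of _ j']) auto
    then show ?thesis by simp
  qed
next
  assume "(x = a \<and> b \<in> set xs) \<or> lt xs a b"
  then show "lt (x#xs) a b"
  proof
    assume "x = a \<and> b \<in> set xs"
    then obtain k where "k < length xs" "xs!k = b" "x = a" by (auto simp: in_set_conv_nth)
    then show ?thesis unfolding lt_def by (intro exI[of _ 0] exI[of _ "Suc k"]) auto
  next
    assume "lt xs a b"
    then obtain i j where "i < j" "j < length xs" "xs!i = a" "xs!j = b" unfolding lt_def by auto
    then show ?thesis unfolding lt_def by (intro exI[of _ "Suc i"] exI[of _ "Suc j"]) auto
  qed
qed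

lemma lt_set: "lt xs a b \<Longrightarrow> a \<in> set xs \<and> b \<in> set xs"
  by (induction xs) (auto simp: lt_Cons)

lemma lt_append: "lt (xs @ ys) a b \<longleftrightarrow> lt xs a b \<or> lt ys a b \<or> (a \<in> set xs \<and> b \<in> set ys)"
  by (induction xs) (auto simp: lt_Cons)

lemma lt_filter: "lt (filter P xs) a b \<Longrightarrow> lt xs a b"
  by (induction xs) (auto simp: lt_Cons split: if_splits)

lemma interval_restrict:
  assumes "is_interval A xs" shows "is_interval (A - {a}) (restrict_axis a xs)"
  unfolding is_interval_def
proof (intro ballI allI impI)
  fix b d c assume b: "b \<in> A - {a}" and d: "d \<in> A - {a}"
    and c: "lt (restrict_axis a xs) b c \<and> lt (restrict_axis a xs) c d"
  then have "c \<in> set (restrict_axis a xs)" using lt_set by blast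
  then have "c \<noteq> a" by (simp add: restrict_axis_def)
  moreover have "c \<in> A" using assms b d c lt_filter unfolding is_interval_def restrict_axis_def by blast
  ultimately show "c \<in> A - {a}" by simp
qed

lemma interval_insert:
  assumes "distinct (us @ a' # a # ws)" "a \<in> A \<longleftrightarrow> a' \<in> A"
    and "is_interval (A - {a}) (us @ a' # ws)"
  shows "is_interval A (us @ a' # a # ws)"
  unfolding is_interval_def
proof (intro ballI allI impI)
  fix b d c assume b: "b \<in> A" and d: "d \<in> A" and c: "lt (us @ a' # a # ws) b c \<and> lt (us @ a' # a # ws) c d"
  have I: "\<And>b d c. b \<in> A - {a} \<Longrightarrow> d \<in> A - {a} \<Longrightarrow> lt (us @ a' # ws) b c \<Longrightarrow> lt (us @ a' # ws) c d \<Longrightarrow> c \<in> A - {a}"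
    using assms(3) unfolding is_interval_def by blast
  define s where "s x = (if x = a then a' else x)" for x
  have sb: "s b \<in> A - {a}" using b assms(1,2) by (auto simp: s_def)
  have sd: "s d \<in> A - {a}" using d assms(1,2) by (auto simp: s_def)
  show "c \<in> A"
  proof (rule ccontr)
    assume cA: "c \<notin> A"
    show False
    proof (cases "a \<in> A")
      case True
      then have "c \<noteq> a" "c \<noteq> a'" using cA assms(2) by auto
      have "lt (us @ a' # ws) (s b) c" using c `c \<noteq> a` `c \<noteq> a'` assms(1)
        by (auto simp: lt_append lt_Cons s_def dest: lt_set)
      moreover have "lt (us @ a' # ws) c (s d)" using c `c \<noteq> a` `c \<noteq> a'` assms(1)
        by (auto simp: lt_append lt_Cons s_def dest: lt_set)
      ultimately show False using I sb sd cA by blast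
    next
      case False
      then have nb: "b \<noteq> a" "b \<noteq> a'" "d \<noteq> a" "d \<noteq> a'" using b d assms(2) by auto
      show False
      proof (cases "c = a")
        case True
        have "lt (us @ a' # ws) b a'" using c True nb assms(1)
          by (auto simp: lt_append lt_Cons dest: lt_set)
        moreover have "lt (us @ a' # ws) a' d" using c True nb assms(1)
          by (auto simp: lt_append lt_Cons dest: lt_set)
        ultimately show False using I[of b d a'] b d nb False assms(2) by blast
      next
        case cna: False
        have "lt (us @ a' # ws) b c" using c cna nb assms(1)
          by (auto simp: lt_append lt_Cons dest: lt_set)
        moreover have "lt (us @ a' # ws) c d" using c cna nb assms(1)
          by (auto simp: lt_append lt_Cons dest: lt_set)
        ultimately show False using I[of b d c] b d nb cA by blast
      qed
    qed
  qed
qed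


lemma remove_cand_eq:
  assumes "is_profile C P" "a \<noteq> a'" "clones P a a'"
  shows "remove_cand a P = map (\<lambda>A. A - {a}) P"
proof -
  have "\<forall>A\<in>set P. A - {a} \<noteq> {}"
    using assms unfolding is_profile_def clones_def by blast
  then show ?thesis unfolding remove_cand_def by (auto simp: filter_id_conv)
qed

lemma sum_map_mono: "(\<And>A. A \<in> set P \<Longrightarrow> f A \<le> (g A::nat)) \<Longrightarrow> (\<Sum>A\<leftarrow>P. f A) \<le> (\<Sum>A\<leftarrow>P. g A)"
  by (induction P) (auto intro: add_mono)

lemma restrict_axes: "xs \<in> axes C \<Longrightarrow> restrict_axis a xs \<in> axes (C - {a})"
  by (auto simp: axes_def restrict_axis_def)

lemma cost_VD_restrict: "cost_VD (A - {a}) (restrict_axis a xs) \<le> cost_VD A xs"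
  using interval_restrict by (auto simp: cost_VD_def)

lemma VD_resistant: "resistant_to_cloning (scoring_rule cost_VD)"
  unfolding resistant_to_cloning_def
proof (intro allI impI conjI)
  fix C P a a' assume H: "finite C \<and> is_profile C P \<and> a \<in> C \<and> a' \<in> C \<and> a \<noteq> a' \<and> clones P a a'"
  let ?P' = "remove_cand a P"
  have P': "?P' = map (\<lambda>A. A - {a}) P" using H remove_cand_eq by blast
  define tot where "tot xs = (\<Sum>A\<leftarrow>P. cost_VD A xs)" for xs
  define tot' where "tot' ys = (\<Sum>A\<leftarrow>P. cost_VD (A - {a}) ys)" for ys
  have tot'eq: "(\<Sum>A\<leftarrow>?P'. cost_VD A ys) = tot' ys" for ys
    unfolding P' tot'_def by (simp add: o_def)
  have R: "tot' (restrict_axis a xs) \<le> tot xs" for xs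
    unfolding tot_def tot'_def by (rule sum_map_mono) (rule cost_VD_restrict)
  have E: "\<exists>xs \<in> axes C. restrict_axis a xs = ys \<and> tot xs \<le> tot' ys" if ys: "ys \<in> axes (C - {a})" for ys
  proof -
    have "a' \<in> set ys" using ys H by (auto simp: axes_def)
    then obtain us ws where uw: "ys = us @ a' # ws" by (meson split_list)
    define xs where "xs = us @ a' # a # ws"
    have dys: "distinct ys" "set ys = C - {a}" using ys by (auto simp: axes_def)
    have dxs: "distinct xs" using dys uw unfolding xs_def by auto
    have "set xs = insert a (set ys)" unfolding xs_def uw by auto
    then have "xs \<in> axes C" using dxs dys H unfolding axes_def by auto
    moreover have "restrict_axis a xs = ys"
    proof -
      have "a \<notin> set us" "a \<notin> set ws" "a' \<noteq> a" using dxs unfolding xs_def by auto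
      then have "filter (\<lambda>x. x \<noteq> a) us = us" "filter (\<lambda>x. x \<noteq> a) ws = ws"
        by (auto intro!: filter_True)
      then show ?thesis unfolding xs_def uw restrict_axis_def using \<open>a' \<noteq> a\<close> by simp
    qed
    moreover have "tot xs \<le> tot' ys"
      unfolding tot_def tot'_def
    proof (rule sum_map_mono)
      fix A assume "A \<in> set P"
      then have "a \<in> A \<longleftrightarrow> a' \<in> A" using H unfolding clones_def by blast
      then have "is_interval (A - {a}) ys \<Longrightarrow> is_interval A xs"
        using interval_insert[of us a' a ws A] dxs uw unfolding xs_def by blast
      then show "cost_VD A xs \<le> cost_VD (A - {a}) ys" by (auto simp: cost_VD_def)
    qed
    ultimately show ?thesis by blast
  qed
  show "\<forall>xs\<in>scoring_rule cost_VD C P. restrict_axis a xs \<in> scoring_rule cost_VD (C - {a}) ?P'"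
  proof
    fix xs assume xs: "xs \<in> scoring_rule cost_VD C P"
    have "restrict_axis a xs \<in> axes (C - {a})" using xs restrict_axes by (auto simp: scoring_rule_def)
    moreover have "tot' (restrict_axis a xs) \<le> tot' zs" if zs: "zs \<in> axes (C - {a})" for zs
    proof -
      obtain xz where "xz \<in> axes C" "tot xz \<le> tot' zs" using E zs by blast
      moreover have "tot xs \<le> tot xz" using xs \<open>xz \<in> axes C\<close> by (auto simp: scoring_rule_def tot_def)
      ultimately show ?thesis using R[of xs] by linarith
    qed
    ultimately show "restrict_axis a xs \<in> scoring_rule cost_VD (C - {a}) ?P'"
      unfolding scoring_rule_def tot'eq by blast
  qed
  show "\<forall>ys\<in>scoring_rule cost_VD (C - {a}) ?P'. \<exists>xs\<in>scoring_rule cost_VD C P. restrict_axis a xs = ys"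
  proof
    fix ys assume ys: "ys \<in> scoring_rule cost_VD (C - {a}) ?P'"
    then have ys1: "ys \<in> axes (C - {a})" and ys2: "\<And>zs. zs \<in> axes (C - {a}) \<Longrightarrow> tot' ys \<le> tot' zs"
      unfolding scoring_rule_def tot'eq by auto
    obtain xs where xs: "xs \<in> axes C" "restrict_axis a xs = ys" "tot xs \<le> tot' ys" using E ys1 by blast
    have "tot xs \<le> tot zs" if "zs \<in> axes C" for zs
      using xs(3) ys2[OF restrict_axes[OF that]] R[of zs] by linarith
    then have "xs \<in> scoring_rule cost_VD C P" using xs(1) unfolding scoring_rule_def tot_def by blast
    then show "\<exists>xs\<in>scoring_rule cost_VD C P. restrict_axis a xs = ys" using xs(2) by blast
  qed
qed


fun ltE :: "axis \<Rightarrow> cand \<Rightarrow> cand \<Rightarrow> bool" where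
  "ltE [] a b = False"
| "ltE (x#xs) a b = ((x = a \<and> b \<in> set xs) \<or> ltE xs a b)"

lemma lt_ltE: "lt xs a b = ltE xs a b"
  by (induction xs) (auto simp: lt_Cons)

definition BCE :: "ballot \<Rightarrow> axis \<Rightarrow> nat" where
  "BCE A xs = length (filter (\<lambda>b. b \<notin> A \<and> (\<exists>a\<in>A. \<exists>c\<in>A. ltE xs a b \<and> ltE xs b c)) xs)"

definition MSE :: "ballot \<Rightarrow> axis \<Rightarrow> nat" where
  "MSE A xs = sum_list (map (\<lambda>x. min (length (filter (\<lambda>y. y \<in> A \<and> ltE xs y x) xs))
      (length (filter (\<lambda>y. y \<in> A \<and> ltE xs x y) xs))) (filter (\<lambda>x. x \<notin> A) xs))"

definition FTE :: "ballot \<Rightarrow> axis \<Rightarrow> nat" where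
  "FTE A xs = sum_list (map (\<lambda>x. (length (filter (\<lambda>y. y \<in> A \<and> ltE xs y x) xs)) *
      (length (filter (\<lambda>y. y \<in> A \<and> ltE xs x y) xs))) (filter (\<lambda>x. x \<notin> A) xs))"

definition MFE :: "ballot \<Rightarrow> axis \<Rightarrow> nat" where
  "MFE A xs = Min (set (map (\<lambda>(x, y). length (filter (\<lambda>z. z \<in> A \<and> (ltE xs z x \<or> ltE xs y z)) xs)
       + length (filter (\<lambda>z. z \<notin> A \<and> ltE xs x z \<and> ltE xs z y) xs))
     (filter (\<lambda>(x, y). x \<in> A \<and> y \<in> A \<and> (ltE xs x y \<or> x = y)) (List.product xs xs))))"

lemma card_filter1: "distinct xs \<Longrightarrow> A \<subseteq> set xs \<Longrightarrow> card {z\<in>A. Q z} = length (filter (\<lambda>z. z \<in> A \<and> Q z) xs)"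
proof -
  assume "distinct xs" "A \<subseteq> set xs"
  then have "set (filter (\<lambda>z. z \<in> A \<and> Q z) xs) = {z\<in>A. Q z}" by auto
  then show ?thesis using distinct_card[of "filter (\<lambda>z. z \<in> A \<and> Q z) xs"] \<open>distinct xs\<close> by simp
qed

lemma card_filter2: "distinct xs \<Longrightarrow> card {z\<in>set xs - A. Q z} = length (filter (\<lambda>z. z \<notin> A \<and> Q z) xs)"
proof -
  assume "distinct xs"
  then have "set (filter (\<lambda>z. z \<notin> A \<and> Q z) xs) = {z\<in>set xs - A. Q z}" by auto
  then show ?thesis using distinct_card[of "filter (\<lambda>z. z \<notin> A \<and> Q z) xs"] \<open>distinct xs\<close> by simp
qed

lemma sum_diff: "distinct xs \<Longrightarrow> sum f (set xs - A) = sum_list (map f (filter (\<lambda>x. x \<notin> A) xs))"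
proof -
  assume "distinct xs"
  then have "sum_list (map f (filter (\<lambda>x. x \<notin> A) xs)) = sum f (set (filter (\<lambda>x. x \<notin> A) xs))"
    by (simp add: sum_list_distinct_conv_sum_set)
  also have "set (filter (\<lambda>x. x \<notin> A) xs) = set xs - A" by auto
  finally show ?thesis by simp
qed

lemma BC_eq: "distinct xs \<Longrightarrow> A \<subseteq> set xs \<Longrightarrow> cost_BC A xs = BCE A xs"
  unfolding cost_BC_def BCE_def lt_ltE by (rule card_filter2)

lemma MS_eq: "distinct xs \<Longrightarrow> A \<subseteq> set xs \<Longrightarrow> cost_MS A xs = MSE A xs"
  unfolding cost_MS_def MSE_def lt_ltE by (simp only: card_filter1 sum_diff)

lemma FT_eq: "distinct xs \<Longrightarrow> A \<subseteq> set xs \<Longrightarrow> cost_FT A xs = FTE A xs"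
  unfolding cost_FT_def FTE_def lt_ltE by (simp only: card_filter1 sum_diff)

lemma MF_eq: "distinct xs \<Longrightarrow> A \<subseteq> set xs \<Longrightarrow> cost_MF A xs = MFE A xs"
proof -
  assume d: "distinct xs" and A: "A \<subseteq> set xs"
  have S: "{(x, y). x \<in> A \<and> y \<in> A \<and> le xs x y} =
     set (filter (\<lambda>(x, y). x \<in> A \<and> y \<in> A \<and> (ltE xs x y \<or> x = y)) (List.product xs xs))"
    using A by (auto simp: le_def lt_ltE)
  show ?thesis unfolding cost_MF_def MFE_def S set_map lt_ltE
    by (simp only: card_filter1[OF d A] card_filter2[OF d])
qed



lemma axes_perms: "distinct L \<Longrightarrow> axes (set L) = set (permutations_of_list_impl L)"
  unfolding axes_def set_permutations_of_list_impl permutations_of_multiset_def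
proof (intro equalityI subsetI)
  fix xs assume d: "distinct L" and "xs \<in> {xs. distinct xs \<and> set xs = set L}"
  then show "xs \<in> {xs. mset xs = mset L}" using set_eq_iff_mset_eq_distinct by blast
next
  fix xs assume d: "distinct L" and "xs \<in> {xs. mset xs = mset L}"
  then have m: "mset xs = mset L" by simp
  then have "distinct xs" using d mset_eq_imp_distinct_iff by blast
  moreover have "set xs = set L" using m mset_eq_setD by blast
  ultimately show "xs \<in> {xs. distinct xs \<and> set xs = set L}" by simp
qed
lemma opt_by_list:
  assumes L: "set L = C'" "distinct L" and P: "\<forall>A\<in>set P'. A \<subseteq> C'"
    and eq: "\<And>A xs. distinct xs \<Longrightarrow> A \<subseteq> set xs \<Longrightarrow> cost A xs = costE A xs"
    and ys: "ys \<in> set (permutations_of_list_impl L)"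
    and chk: "list_all (\<lambda>zs. (\<Sum>A\<leftarrow>P'. costE A ys) \<le> (\<Sum>A\<leftarrow>P'. costE A zs)) (permutations_of_list_impl L)"
  shows "ys \<in> scoring_rule cost C' P'"
proof -
  have ax: "axes C' = set (permutations_of_list_impl L)" using axes_perms L by blast
  have T: "(\<Sum>A\<leftarrow>P'. cost A zs) = (\<Sum>A\<leftarrow>P'. costE A zs)" if "zs \<in> axes C'" for zs
  proof -
    have "distinct zs" "set zs = C'" using that by (auto simp: axes_def)
    then show ?thesis using P eq by (intro arg_cong[where f=sum_list] map_cong) auto
  qed
  show ?thesis unfolding scoring_rule_def using ys chk T ax
    by (auto simp: list_all_iff)
qed

lemma insertion:
  assumes "distinct xs" "a \<in> set xs"
  shows "\<exists>i\<in>set [0..<Suc (length (restrict_axis a xs))].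
           xs = take i (restrict_axis a xs) @ a # drop i (restrict_axis a xs)"
proof -
  obtain us ws where uw: "xs = us @ a # ws" using assms(2) by (meson split_list)
  have "a \<notin> set us" "a \<notin> set ws" using assms(1) uw by auto
  then have "filter (\<lambda>x. x \<noteq> a) us = us" "filter (\<lambda>x. x \<noteq> a) ws = ws"
    by (auto intro!: filter_True)
  then have r: "restrict_axis a xs = us @ ws" unfolding restrict_axis_def uw by simp
  show ?thesis unfolding r by (rule bexI[of _ "length us"]) (auto simp: uw)
qed

lemma no_ext:
  assumes zz: "zz \<in> axes C" and P: "\<forall>A\<in>set P. A \<subseteq> C" and a: "a \<in> C"
    and eq: "\<And>A xs. distinct xs \<Longrightarrow> A \<subseteq> set xs \<Longrightarrow> cost A xs = costE A xs"
    and chk: "list_all (\<lambda>i. (\<Sum>A\<leftarrow>P. costE A zz) < (\<Sum>A\<leftarrow>P. costE A (take i ys @ a # drop i ys)))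
                [0..<Suc (length ys)]"
  shows "\<forall>xs\<in>scoring_rule cost C P. restrict_axis a xs \<noteq> ys"
proof (intro ballI notI)
  fix xs assume xs: "xs \<in> scoring_rule cost C P" and r: "restrict_axis a xs = ys"
  have T: "(\<Sum>A\<leftarrow>P. cost A zs) = (\<Sum>A\<leftarrow>P. costE A zs)" if "zs \<in> axes C" for zs
  proof -
    have "distinct zs" "set zs = C" using that by (auto simp: axes_def)
    then show ?thesis using P eq by (intro arg_cong[where f=sum_list] map_cong) auto
  qed
  have xa: "xs \<in> axes C" and le: "(\<Sum>A\<leftarrow>P. cost A xs) \<le> (\<Sum>A\<leftarrow>P. cost A zz)"
    using xs zz unfolding scoring_rule_def by auto
  have "distinct xs" "a \<in> set xs" using xa a by (auto simp: axes_def)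
  from insertion[OF this] obtain i where i: "i \<in> set [0..<Suc (length (restrict_axis a xs))]"
    and xi: "xs = take i (restrict_axis a xs) @ a # drop i (restrict_axis a xs)" by blast
  note i = i[unfolded r] and xi = xi[unfolded r]
  have "(\<Sum>A\<leftarrow>P. costE A zz) < (\<Sum>A\<leftarrow>P. costE A xs)" using chk i xi by (auto simp: list_all_iff)
  then show False using le T[OF xa] T[OF zz] by linarith
qed

lemma not_resistant:
  assumes "finite C" "is_profile C P" "a \<in> C" "a' \<in> C" "a \<noteq> a'" "clones P a a'"
    "ys \<in> f (C - {a}) (remove_cand a P)" "\<forall>xs\<in>f C P. restrict_axis a xs \<noteq> ys"
  shows "\<not> resistant_to_cloning f"
  using assms unfolding resistant_to_cloning_def by blast

lemma BC_not: "\<not> resistant_to_cloning (scoring_rule cost_BC)"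
proof (rule not_resistant[of "{0,1,2,3}" "[{2,3},{0,1,2},{0,1,3}]" 0 1 "[2,1,3]"])
  have rc: "remove_cand 0 [{2,3},{0,1,2},{0,1,3}] = [{2,3},{1,2},{1,3}]"
    by (simp add: remove_cand_def insert_Diff_if)
  have c: "({0,1,2,3} - {0}::nat set) = set [1,2,3]" by auto
  have k1: "list_all (\<lambda>zs. (\<Sum>A\<leftarrow>[{2,3},{1,2},{1,3}]. BCE A [2,1,3]) \<le> (\<Sum>A\<leftarrow>[{2,3},{1,2},{1,3::nat}]. BCE A zs)) (permutations_of_list_impl [1,2,3])"
    by code_simp
  have k2: "[2,1,3] \<in> set (permutations_of_list_impl [1,2,3::nat])" by code_simp
  show "[2,1,3] \<in> scoring_rule cost_BC ({0,1,2,3} - {0}) (remove_cand 0 [{2,3},{0,1,2},{0,1,3}])"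
    unfolding rc c
    by (rule opt_by_list[where L="[1,2,3]" and costE=BCE, OF refl _ _ BC_eq k2 k1]) auto
  have k3: "list_all (\<lambda>i. (\<Sum>A\<leftarrow>[{2,3},{0,1,2},{0,1,3}]. BCE A [0,1,2,3]) < (\<Sum>A\<leftarrow>[{2,3},{0,1,2},{0,1,3::nat}]. BCE A (take i [2,1,3] @ 0 # drop i [2,1,3])))
                [0..<Suc (length [2,1,3::nat])]" by code_simp
  show "\<forall>xs\<in>scoring_rule cost_BC {0,1,2,3} [{2,3},{0,1,2},{0,1,3}]. restrict_axis 0 xs \<noteq> [2,1,3]"
    by (rule no_ext[where zz="[0,1,2,3]" and costE=BCE, OF _ _ _ BC_eq k3]) (auto simp: axes_def)
qed (auto simp: is_profile_def clones_def)

lemma MS_not: "\<not> resistant_to_cloning (scoring_rule cost_MS)"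
proof (rule not_resistant[of "{0,1,2,3}" "[{2,3},{0,1,2},{0,1,3}]" 0 1 "[2,1,3]"])
  have rc: "remove_cand 0 [{2,3},{0,1,2},{0,1,3}] = [{2,3},{1,2},{1,3}]"
    by (simp add: remove_cand_def insert_Diff_if)
  have c: "({0,1,2,3} - {0}::nat set) = set [1,2,3]" by auto
  have k1: "list_all (\<lambda>zs. (\<Sum>A\<leftarrow>[{2,3},{1,2},{1,3}]. MSE A [2,1,3]) \<le> (\<Sum>A\<leftarrow>[{2,3},{1,2},{1,3}]. MSE A zs)) (permutations_of_list_impl ([1,2,3]::nat list))"
    by code_simp
  have k2: "[2,1,3] \<in> set (permutations_of_list_impl ([1,2,3]::nat list))" by code_simp
  show "[2,1,3] \<in> scoring_rule cost_MS ({0,1,2,3} - {0}) (remove_cand 0 [{2,3},{0,1,2},{0,1,3}])"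
    unfolding rc c
    by (rule opt_by_list[where L="[1,2,3]" and costE=MSE, OF refl _ _ MS_eq k2 k1]) auto
  have k3: "list_all (\<lambda>i. (\<Sum>A\<leftarrow>[{2,3},{0,1,2},{0,1,3}]. MSE A [0,1,2,3]) < (\<Sum>A\<leftarrow>[{2,3},{0,1,2},{0,1,3}]. MSE A (take i [2,1,3] @ 0 # drop i [2,1,3])))
                [0..<Suc (length ([2,1,3]::nat list))]" by code_simp
  show "\<forall>xs\<in>scoring_rule cost_MS {0,1,2,3} [{2,3},{0,1,2},{0,1,3}]. restrict_axis 0 xs \<noteq> [2,1,3]"
    by (rule no_ext[where zz="[0,1,2,3]" and costE=MSE, OF _ _ _ MS_eq k3]) (auto simp: axes_def)
qed (auto simp: is_profile_def clones_def)

lemma FT_not: "\<not> resistant_to_cloning (scoring_rule cost_FT)"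
proof (rule not_resistant[of "{0,1,2,3,4}" "[{2,3},{2,4},{0,1,2}]" 0 1 "[1,4,2,3]"])
  have rc: "remove_cand 0 [{2,3},{2,4},{0,1,2}] = [{2,3},{2,4},{1,2}]"
    by (simp add: remove_cand_def insert_Diff_if)
  have c: "({0,1,2,3,4} - {0}::nat set) = set [1,2,3,4]" by auto
  have k1: "list_all (\<lambda>zs. (\<Sum>A\<leftarrow>[{2,3},{2,4},{1,2}]. FTE A [1,4,2,3]) \<le> (\<Sum>A\<leftarrow>[{2,3},{2,4},{1,2}]. FTE A zs)) (permutations_of_list_impl ([1,2,3,4]::nat list))"
    by code_simp
  have k2: "[1,4,2,3] \<in> set (permutations_of_list_impl ([1,2,3,4]::nat list))" by code_simp
  show "[1,4,2,3] \<in> scoring_rule cost_FT ({0,1,2,3,4} - {0}) (remove_cand 0 [{2,3},{2,4},{0,1,2}])"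
    unfolding rc c
    by (rule opt_by_list[where L="[1,2,3,4]" and costE=FTE, OF refl _ _ FT_eq k2 k1]) auto
  have k3: "list_all (\<lambda>i. (\<Sum>A\<leftarrow>[{2,3},{2,4},{0,1,2}]. FTE A [0,1,2,3,4]) < (\<Sum>A\<leftarrow>[{2,3},{2,4},{0,1,2}]. FTE A (take i [1,4,2,3] @ 0 # drop i [1,4,2,3])))
                [0..<Suc (length ([1,4,2,3]::nat list))]" by code_simp
  show "\<forall>xs\<in>scoring_rule cost_FT {0,1,2,3,4} [{2,3},{2,4},{0,1,2}]. restrict_axis 0 xs \<noteq> [1,4,2,3]"
    by (rule no_ext[where zz="[0,1,2,3,4]" and costE=FTE, OF _ _ _ FT_eq k3]) (auto simp: axes_def)
qed (auto simp: is_profile_def clones_def)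

lemma MF_not: "\<not> resistant_to_cloning (scoring_rule cost_MF)"
proof (rule not_resistant[of "{0,1,2,3,4,5}" "[{0,1,2,4},{2,3,4,5},{0,1,2,5},{3,5}]" 0 1 "[4,2,1,5,3]"])
  have rc: "remove_cand 0 [{0,1,2,4},{2,3,4,5},{0,1,2,5},{3,5}] = [{1,2,4},{2,3,4,5},{1,2,5},{3,5}]"
    by (simp add: remove_cand_def insert_Diff_if)
  have c: "({0,1,2,3,4,5} - {0}::nat set) = set [1,2,3,4,5]" by auto
  have k1: "list_all (\<lambda>zs. (\<Sum>A\<leftarrow>[{1,2,4},{2,3,4,5},{1,2,5},{3,5}]. MFE A [4,2,1,5,3]) \<le> (\<Sum>A\<leftarrow>[{1,2,4},{2,3,4,5},{1,2,5},{3,5}]. MFE A zs)) (permutations_of_list_impl ([1,2,3,4,5]::nat list))"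
    by code_simp
  have k2: "[4,2,1,5,3] \<in> set (permutations_of_list_impl ([1,2,3,4,5]::nat list))" by code_simp
  show "[4,2,1,5,3] \<in> scoring_rule cost_MF ({0,1,2,3,4,5} - {0}) (remove_cand 0 [{0,1,2,4},{2,3,4,5},{0,1,2,5},{3,5}])"
    unfolding rc c
    by (rule opt_by_list[where L="[1,2,3,4,5]" and costE=MFE, OF refl _ _ MF_eq k2 k1]) auto
  have k3: "list_all (\<lambda>i. (\<Sum>A\<leftarrow>[{0,1,2,4},{2,3,4,5},{0,1,2,5},{3,5}]. MFE A [0,1,2,4,3,5]) < (\<Sum>A\<leftarrow>[{0,1,2,4},{2,3,4,5},{0,1,2,5},{3,5}]. MFE A (take i [4,2,1,5,3] @ 0 # drop i [4,2,1,5,3])))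
                [0..<Suc (length ([4,2,1,5,3]::nat list))]" by code_simp
  show "\<forall>xs\<in>scoring_rule cost_MF {0,1,2,3,4,5} [{0,1,2,4},{2,3,4,5},{0,1,2,5},{3,5}]. restrict_axis 0 xs \<noteq> [4,2,1,5,3]"
    by (rule no_ext[where zz="[0,1,2,4,3,5]" and costE=MFE, OF _ _ _ MF_eq k3]) (auto simp: axes_def)
qed (auto simp: is_profile_def clones_def)

theorem mainTheorem10:
  shows "resistant_to_cloning (scoring_rule cost_VD) \<and>
         (\<forall>cost \<in> {cost_MF, cost_BC, cost_MS, cost_FT}.
            \<not> resistant_to_cloning (scoring_rule cost))"
  using VD_resistant MF_not BC_not MS_not FT_not by auto


end
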